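(* Let $S=\Sigma^*$ be the free monoid over an alphabet $\Sigma$. Then: (1) $[1,1]=\rho_1$; (2) $[1,[1,1]]=0$ (so $S$ is left $2$-nilpotent); (3) if $|\Sigma|\le2$, then $\rho_2=[[1,1],1]=[1,1,1]$ and $\rho_2$ is cancellative; if $|\Sigma|\ge3$, then $\rho_2$ is not cancellative; (4) $S$ is right nilpotent if and only if $|\Sigma|\le1$.
   Context: $q_1(x,y,z)=xy$, $q_{k+1}(x,y,z)=q_k(x,y,z)\,z_k\,q_k(y,x,z)$ for $z=(z_1,z_2,\dots)$; $\rho_n$ is the congruence of $S$ generated by all pairs $(q_n(x,y,z),q_n(y,x,z))$ with $x,y\in S$, $z\in S^{\mathbb N}$ (so $\rho_1$ is generated by $(xy,yx)$, $\rho_2$ by $(xyz_1yx,yxz_1xy)$). A congruence $\sigma$ is cancellative if $S/\sigma$ is cancellative. Commutators are those of the semigroup $(S,\cdot)$: for congruences $\alpha_1,\dots,\alpha_k$, $M(\alpha_1,\dots,\alpha_k)$ is the subsemigroup of $S^{\{0,1\}^k}$ generated by all $g$ such that for some $i$ and $(a,b)\in\alpha_i$, $g(x)=a$ if $x_i=0$ and $g(x)=b$ if $x_i=1$; $[\alpha_1,\dots,\alpha_k]$ is the smallest congruence $\delta$ such that for all $f\in M(\alpha_1,\dots,\alpha_k)$: if $(f(x0),f(x1))\in\delta$ for all $x\in\{0,1\}^{k-1}\setminus\{(1,\dots,1)\}$ then $(f(1,\dots,1,0),f(1,\dots,1,1))\in\delta$. $1$ is the total and $0$ the trivial congruence; $[1)^1=1$,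 $[1)^{j+1}=[[1)^j,1]$; $S$ is right nilpotent if $[1)^{d+1}=0$ for some $d\in\mathbb N$. *)

theory Defs
  imports Main
begin

definition is_cong :: "'a set \<Rightarrow> ('a \<Rightarrow> 'a \<Rightarrow> 'a) \<Rightarrow> 'a rel \<Rightarrow> bool" where
  "is_cong A mult r \<longleftrightarrow> equiv A r \<and>
     (\<forall>a b c d. (a, b) \<in> r \<longrightarrow> (c, d) \<in> r \<longrightarrow> (mult a c, mult b d) \<in> r)"

definition cong_gen :: "'a set \<Rightarrow> ('a \<Rightarrow> 'a \<Rightarrow> 'a) \<Rightarrow> 'a rel \<Rightarrow> 'a rel" where
  "cong_gen A mult R = \<Inter>{r. is_cong A mult r \<and> R \<subseteq> r}"

definition total_cong :: "'a set \<Rightarrow> 'a rel" where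
  "total_cong A = A \<times> A"

definition trivial_cong :: "'a set \<Rightarrow> 'a rel" where
  "trivial_cong A = Id_on A"

text \<open>qq mult k x y z is the paper's q_{k+1}(x,y,z); z i is the paper's z_i (i \<ge> 1).\<close>
fun qq :: "('a \<Rightarrow> 'a \<Rightarrow> 'a) \<Rightarrow> nat \<Rightarrow> 'a \<Rightarrow> 'a \<Rightarrow> (nat \<Rightarrow> 'a) \<Rightarrow> 'a" where
  "qq mult 0 x y z = mult x y"
| "qq mult (Suc k) x y z = mult (mult (qq mult k x y z) (z (Suc k))) (qq mult k y x z)"

text \<open>rho A mult n is the paper's rho_n (for n \<ge> 1).\<close>
definition rho :: "'a set \<Rightarrow> ('a \<Rightarrow> 'a \<Rightarrow> 'a) \<Rightarrow> nat \<Rightarrow> 'a rel" where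
  "rho A mult n = cong_gen A mult
     {(qq mult (n - 1) x y z, qq mult (n - 1) y x z) | x y z.
        x \<in> A \<and> y \<in> A \<and> (\<forall>i. z i \<in> A)}"

definition cancellative_cong :: "'a set \<Rightarrow> ('a \<Rightarrow> 'a \<Rightarrow> 'a) \<Rightarrow> 'a rel \<Rightarrow> bool" where
  "cancellative_cong A mult s \<longleftrightarrow>
     (\<forall>a\<in>A. \<forall>b\<in>A. \<forall>c\<in>A.
        ((mult a c, mult b c) \<in> s \<longrightarrow> (a, b) \<in> s) \<and>
        ((mult c a, mult c b) \<in> s \<longrightarrow> (a, b) \<in> s))"

text \<open>M(alpha_1,...,alpha_k): elements of S^{{0,1}^k} are represented as functions on
  bool lists (only values at lists of length k matter; False = 0, True = 1;
  coordinate i (1-based) is list index i-1).\<close>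
inductive_set Mset :: "('a \<Rightarrow> 'a \<Rightarrow> 'a) \<Rightarrow> 'a rel list \<Rightarrow> (bool list \<Rightarrow> 'a) set"
  for mult :: "'a \<Rightarrow> 'a \<Rightarrow> 'a" and als :: "'a rel list" where
  gen: "i < length als \<Longrightarrow> (a, b) \<in> als ! i \<Longrightarrow>
          (\<lambda>x. if x ! i then b else a) \<in> Mset mult als"
| prod: "g \<in> Mset mult als \<Longrightarrow> h \<in> Mset mult als \<Longrightarrow>
          (\<lambda>x. mult (g x) (h x)) \<in> Mset mult als"

definition term_cond :: "('a \<Rightarrow> 'a \<Rightarrow> 'a) \<Rightarrow> 'a rel list \<Rightarrow> 'a rel \<Rightarrow> bool" where
  "term_cond mult als d \<longleftrightarrow>
     (\<forall>g \<in> Mset mult als.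
        (\<forall>x. length x = length als - 1 \<and> x \<noteq> replicate (length als - 1) True \<longrightarrow>
              (g (x @ [False]), g (x @ [True])) \<in> d) \<longrightarrow>
        (g (replicate (length als - 1) True @ [False]),
         g (replicate (length als - 1) True @ [True])) \<in> d)"

definition commutator :: "'a set \<Rightarrow> ('a \<Rightarrow> 'a \<Rightarrow> 'a) \<Rightarrow> 'a rel list \<Rightarrow> 'a rel" where
  "commutator A mult als = \<Inter>{d. is_cong A mult d \<and> term_cond mult als d}"

text \<open>rpow A mult j is the paper's [1)^{j+1}.\<close>
fun rpow :: "'a set \<Rightarrow> ('a \<Rightarrow> 'a \<Rightarrow> 'a) \<Rightarrow> nat \<Rightarrow> 'a rel" where
  "rpow A mult 0 = total_cong A"
| "rpow A mult (Suc j) = commutator A mult [rpow A mult j, total_cong A]"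

definition right_nilpotent :: "'a set \<Rightarrow> ('a \<Rightarrow> 'a \<Rightarrow> 'a) \<Rightarrow> bool" where
  "right_nilpotent A mult \<longleftrightarrow> (\<exists>d::nat. d \<ge> 1 \<and> rpow A mult d = trivial_cong A)"

end

theory Submission
  imports Defs "HOL-Library.Multiset"
begin


lemma is_cong_sub: "is_cong A m r \<Longrightarrow> r \<subseteq> A \<times> A"
  by (simp add: is_cong_def equiv_def)
lemma is_cong_refl: "is_cong A m r \<Longrightarrow> x \<in> A \<Longrightarrow> (x,x) \<in> r"
  by (simp add: is_cong_def equiv_def refl_on_def)
lemma is_cong_sym: "is_cong A m r \<Longrightarrow> (x,y) \<in> r \<Longrightarrow> (y,x) \<in> r"
  by (auto simp: is_cong_def equiv_def sym_def)
lemma is_cong_trans: "is_cong A m r \<Longrightarrow> (x,y) \<in> r \<Longrightarrow> (y,z) \<in> r \<Longrightarrow> (x,z) \<in> r"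
  unfolding is_cong_def equiv_def trans_def by blast
lemma is_cong_comp: "is_cong A m r \<Longrightarrow> (x,y) \<in> r \<Longrightarrow> (u,v) \<in> r \<Longrightarrow> (m x u, m y v) \<in> r"
  by (simp add: is_cong_def)

lemma cong_gen_least: "is_cong A m r \<Longrightarrow> R \<subseteq> r \<Longrightarrow> cong_gen A m R \<subseteq> r"
  unfolding cong_gen_def by blast
lemma cong_gen_sup: "R \<subseteq> cong_gen A m R"
  unfolding cong_gen_def by blast

lemma is_cong_total: "(\<forall>a\<in>A. \<forall>b\<in>A. m a b \<in> A) \<Longrightarrow> is_cong A m (A \<times> A)"
  by (auto simp: is_cong_def equiv_def refl_on_def sym_def trans_def)

lemma is_cong_cong_gen:
  assumes cl: "\<forall>a\<in>A. \<forall>b\<in>A. m a b \<in> A" and R: "R \<subseteq> A \<times> A"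
  shows "is_cong A m (cong_gen A m R)"
proof -
  have sub: "cong_gen A m R \<subseteq> A \<times> A" by (rule cong_gen_least[OF is_cong_total[OF cl] R])
  show ?thesis
    unfolding is_cong_def equiv_def refl_on_def sym_def trans_def
  proof (intro conjI allI impI ballI)
    show "cong_gen A m R \<subseteq> A \<times> A" by (rule sub)
    fix x assume "x \<in> A" thus "(x,x) \<in> cong_gen A m R"
      unfolding cong_gen_def by (auto intro: is_cong_refl)
  next
    fix x y assume "(x,y) \<in> cong_gen A m R" thus "(y,x) \<in> cong_gen A m R"
      unfolding cong_gen_def by (auto intro: is_cong_sym)
  next
    fix x y z assume "(x,y) \<in> cong_gen A m R" "(y,z) \<in> cong_gen A m R"
    thus "(x,z) \<in> cong_gen A m R"
      unfolding cong_gen_def by (auto intro: is_cong_trans)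
  next
    fix a b c d assume "(a,b) \<in> cong_gen A m R" "(c,d) \<in> cong_gen A m R"
    thus "(m a c, m b d) \<in> cong_gen A m R"
      unfolding cong_gen_def by (auto intro: is_cong_comp)
  qed
qed

lemma comm_least: "is_cong A m d \<Longrightarrow> term_cond m als d \<Longrightarrow> commutator A m als \<subseteq> d"
  unfolding commutator_def by blast
lemma comm_memI: "(\<And>d. is_cong A m d \<Longrightarrow> term_cond m als d \<Longrightarrow> p \<in> d) \<Longrightarrow> p \<in> commutator A m als"
  unfolding commutator_def by blast

lemma len1: "(\<forall>x. length x = 1 \<and> x \<noteq> [True] \<longrightarrow> P x) \<longleftrightarrow> P [False]"
  apply (auto simp: length_Suc_conv)
  apply (case_tac y; simp)
  done
lemma len2: "(\<forall>x. length x = Suc (Suc 0) \<and> x \<noteq> [True,True] \<longrightarrow> P x) \<longleftrightarrow> P [False,False] \<and> P [False,True] \<and> P [True,False]"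
  apply (auto simp: length_Suc_conv numeral_2_eq_2)
   apply (case_tac y; case_tac ya; simp)+
  done

lemma term_cond2: "term_cond m [\<alpha>,\<beta>] d \<longleftrightarrow>
  (\<forall>g\<in>Mset m [\<alpha>,\<beta>]. (g[False,False], g[False,True]) \<in> d \<longrightarrow> (g[True,False], g[True,True]) \<in> d)"
proof -
  have "(\<forall>x. length x = 1 \<and> x \<noteq> [True] \<longrightarrow> (g (x @ [False]), g (x @ [True])) \<in> d)
     \<longleftrightarrow> (g[False,False], g[False,True]) \<in> d" for g
    using len1[of "\<lambda>x. (g (x @ [False]), g (x @ [True])) \<in> d"] by simp
  thus ?thesis unfolding term_cond_def by simp
qed

lemma term_cond3: "term_cond m [\<alpha>,\<beta>,\<gamma>] d \<longleftrightarrow>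
  (\<forall>g\<in>Mset m [\<alpha>,\<beta>,\<gamma>]. (g[False,False,False], g[False,False,True]) \<in> d
     \<and> (g[False,True,False], g[False,True,True]) \<in> d
     \<and> (g[True,False,False], g[True,False,True]) \<in> d
     \<longrightarrow> (g[True,True,False], g[True,True,True]) \<in> d)"
proof -
  have e: "(\<forall>x. length x = Suc (Suc 0) \<and> x \<noteq> [True,True] \<longrightarrow> (g (x @ [False]), g (x @ [True])) \<in> d)
     \<longleftrightarrow> (g[False,False,False], g[False,False,True]) \<in> d
     \<and> (g[False,True,False], g[False,True,True]) \<in> d
     \<and> (g[True,False,False], g[True,False,True]) \<in> d" for g
    using len2[of "\<lambda>x. (g (x @ [False]), g (x @ [True])) \<in> d"] by simp
  have l: "length [\<alpha>,\<beta>,\<gamma>] - 1 = Suc (Suc 0)" by simp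
  have r: "replicate (Suc (Suc 0)) True = [True,True]" by simp
  show ?thesis unfolding term_cond_def l r e by (simp only: append_Cons append_Nil)
qed

lemma Mset_vals: "f \<in> Mset (@) als \<Longrightarrow> (\<forall>i<length als. als!i \<subseteq> lists S \<times> lists S) \<Longrightarrow> f x \<in> lists S"
proof (induction rule: Mset.induct)
  case (gen i a b)
  hence "(a,b) \<in> lists S \<times> lists S" by blast
  thus ?case by simp
next
  case (prod g h)
  thus ?case by simp
qed

lemma Mset_app: "g \<in> Mset (@) als \<Longrightarrow> h \<in> Mset (@) als \<Longrightarrow> (\<lambda>x. g x @ h x) \<in> Mset (@) als"
  by (rule Mset.prod)

lemma cong_lists: "\<forall>a\<in>lists S. \<forall>b\<in>lists S. a @ b \<in> lists S" by simp

lemma cong_ctx: "is_cong (lists S) (@) r \<Longrightarrow> (x,y) \<in> r \<Longrightarrow> p \<in> lists S \<Longrightarrow> s \<in> lists S \<Longrightarrow> (p@x@s, p@y@s) \<in> r"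
proof -
  assume c: "is_cong (lists S) (@) r" and xy: "(x,y) \<in> r" and p: "p \<in> lists S" and s: "s \<in> lists S"
  have "(p,p) \<in> r" by (rule is_cong_refl[OF c p])
  moreover have "(s,s) \<in> r" by (rule is_cong_refl[OF c s])
  ultimately show ?thesis using is_cong_comp[OF c] xy by blast
qed



definition KM :: "'a set \<Rightarrow> 'a list rel" where
  "KM S = {(u,v). u \<in> lists S \<and> v \<in> lists S \<and> mset u = mset v}"

lemma is_cong_KM: "is_cong (lists S) (@) (KM S)"
  by (auto simp: is_cong_def equiv_def refl_on_def sym_def trans_def KM_def)

lemma rho1_gen: "x \<in> lists S \<Longrightarrow> y \<in> lists S \<Longrightarrow> (x @ y, y @ x) \<in> rho (lists S) (@) 1"
  unfolding rho_def
  by (rule subsetD[OF cong_gen_sup]) (auto intro!: exI[of _ "\<lambda>_. []"])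

lemma is_cong_rho: "is_cong (lists S) (@) (rho (lists S) (@) n)"
  unfolding rho_def
proof (rule is_cong_cong_gen)
  show "\<forall>a\<in>lists S. \<forall>b\<in>lists S. a @ b \<in> lists S" by simp
  have "qq (@) k x y z \<in> lists S" if "x \<in> lists S" "y \<in> lists S" "\<forall>i. z i \<in> lists S" for k x y z
    using that by (induction k arbitrary: x y) auto
  thus "{(qq (@) (n - 1) x y z, qq (@) (n - 1) y x z) |x y z.
     x \<in> lists S \<and> y \<in> lists S \<and> (\<forall>i. z i \<in> lists S)} \<subseteq> lists S \<times> lists S"
    by blast
qed

lemma rho1_sub_KM: "rho (lists S) (@) 1 \<subseteq> KM S"
  unfolding rho_def
  by (rule cong_gen_least[OF is_cong_KM]) (auto simp: KM_def)

lemma KM_sub_rho1: "mset u = mset v \<Longrightarrow> u \<in> lists S \<Longrightarrow> v \<in> lists S \<Longrightarrow> (u,v) \<in> rho (lists S) (@) 1"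
proof (induction u arbitrary: v)
  case Nil
  thus ?case by (auto intro: is_cong_refl[OF is_cong_rho])
next
  case (Cons c u)
  have "c \<in> set v" using Cons.prems(1) by (metis list.set_intros(1) set_mset_mset)
  then obtain v1 v2 where v: "v = v1 @ c # v2" by (meson split_list)
  have "mset u = mset (v1 @ v2)" using Cons.prems(1) v by simp
  hence IH: "(u, v1 @ v2) \<in> rho (lists S) (@) 1" using Cons v by auto
  have c: "c \<in> S" "v1 \<in> lists S" "v2 \<in> lists S" using Cons.prems v by auto
  have 1: "([c] @ u, [c] @ (v1 @ v2)) \<in> rho (lists S) (@) 1"
    using cong_ctx[OF is_cong_rho IH, of "[c]" "[]"] c by simp
  have "([c] @ v1, v1 @ [c]) \<in> rho (lists S) (@) 1" by (rule rho1_gen) (use c in auto)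
  hence 2: "([] @ ([c] @ v1) @ v2, [] @ (v1 @ [c]) @ v2) \<in> rho (lists S) (@) 1"
    by (rule cong_ctx[OF is_cong_rho]) (use c in auto)
  show ?case using is_cong_trans[OF is_cong_rho 1] 2 v by simp
qed

lemma rho1_eq_KM: "rho (lists S) (@) 1 = KM S"
proof
  show "rho (lists S) (@) 1 \<subseteq> KM S" by (rule rho1_sub_KM)
  show "KM S \<subseteq> rho (lists S) (@) 1"
  proof
    fix p assume "p \<in> KM S"
    then obtain u v where "p = (u,v)" "mset u = mset v" "u \<in> lists S" "v \<in> lists S"
      unfolding KM_def by blast
    thus "p \<in> rho (lists S) (@) 1" using KM_sub_rho1 by blast
  qed
qed

lemma tc2D: "term_cond m [\<alpha>,\<beta>] d \<Longrightarrow> g \<in> Mset m [\<alpha>,\<beta>] \<Longrightarrow> (g[False,False], g[False,True]) \<in> d \<Longrightarrow> (g[True,False], g[True,True]) \<in> d"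
  unfolding term_cond2 by blast

lemma tc3D: "term_cond m [\<alpha>,\<beta>,\<gamma>] d \<Longrightarrow> g \<in> Mset m [\<alpha>,\<beta>,\<gamma>] \<Longrightarrow> (g[False,False,False], g[False,False,True]) \<in> d
     \<Longrightarrow> (g[False,True,False], g[False,True,True]) \<in> d
     \<Longrightarrow> (g[True,False,False], g[True,False,True]) \<in> d
     \<Longrightarrow> (g[True,True,False], g[True,True,True]) \<in> d"
  unfolding term_cond3 by blast

lemma total_sub: "\<forall>i<length [lists S \<times> lists S, lists S \<times> lists S]. [lists S \<times> lists S, lists S \<times> lists S]!i \<subseteq> lists S \<times> lists S"
  by (auto simp: less_Suc_eq)

lemma inv_mset2: "f \<in> Mset (@) [\<alpha>,\<beta>] \<Longrightarrow>
  mset (f[True,True]) + mset (f[False,False]) = mset (f[True,False]) + mset (f[False,True])"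
proof (induction rule: Mset.induct)
  case (gen i a b)
  hence "i = 0 \<or> i = 1" by auto
  thus ?case by auto
next
  case (prod g h)
  thus ?case by (simp add: add_ac)
qed

lemma tc_KM: "term_cond (@) [lists S \<times> lists S, lists S \<times> lists S] (KM S)"
  unfolding term_cond2
proof (intro ballI impI)
  fix g assume g: "g \<in> Mset (@) [lists S \<times> lists S, lists S \<times> lists S]"
    and h: "(g [False, False], g [False, True]) \<in> KM S"
  have v: "g x \<in> lists S" for x by (rule Mset_vals[OF g total_sub])
  have "mset (g[True,True]) + mset (g[False,False]) = mset (g[True,False]) + mset (g[False,True])"
    by (rule inv_mset2[OF g])
  moreover have "mset (g[False,False]) = mset (g[False,True])" using h by (simp add: KM_def)
  ultimately have "mset (g[True,False]) = mset (g[True,True])" by simp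
  thus "(g [True, False], g [True, True]) \<in> KM S" using v by (simp add: KM_def)
qed

lemma rho1_sub_comm11: "rho (lists S) (@) 1 \<subseteq> commutator (lists S) (@) [total_cong (lists S), total_cong (lists S)]"
proof
  fix p assume p: "p \<in> rho (lists S) (@) 1"
  show "p \<in> commutator (lists S) (@) [total_cong (lists S), total_cong (lists S)]"
  proof (rule comm_memI)
    fix d assume d: "is_cong (lists S) (@) d" and tc: "term_cond (@) [total_cong (lists S), total_cong (lists S)] d"
    have key: "(x @ y, y @ x) \<in> d" if x: "x \<in> lists S" and y: "y \<in> lists S" for x y
    proof -
      let ?f = "\<lambda>w. (if w!1 then y else []) @ ((if w!0 then x else []) @ (if w!1 then [] else y))"
      have "?f \<in> Mset (@) [total_cong (lists S), total_cong (lists S)]"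
        by (intro Mset_app Mset.gen) (use x y in \<open>auto simp: total_cong_def\<close>)
      moreover have "(?f [False,False], ?f [False,True]) \<in> d"
      proof -
        have "(y,y) \<in> d" using is_cong_refl[OF d y] .
        thus ?thesis by simp
      qed
      ultimately have "(?f [True,False], ?f [True,True]) \<in> d" by (rule tc2D[OF tc])
      thus ?thesis by simp
    qed
    have "rho (lists S) (@) 1 \<subseteq> d" unfolding rho_def
      by (rule cong_gen_least[OF d]) (auto intro: key)
    thus "p \<in> d" using p by blast
  qed
qed

lemma part1: "commutator (lists S) (@) [total_cong (lists S), total_cong (lists S)] = rho (lists S) (@) 1"
proof
  show "commutator (lists S) (@) [total_cong (lists S), total_cong (lists S)] \<subseteq> rho (lists S) (@) 1"
    unfolding rho1_eq_KM total_cong_def by (rule comm_least[OF is_cong_KM tc_KM])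
  show "rho (lists S) (@) 1 \<subseteq> commutator (lists S) (@) [total_cong (lists S), total_cong (lists S)]"
    by (rule rho1_sub_comm11)
qed



lemma inv_len: "f \<in> Mset (@) [\<alpha>, KM S] \<Longrightarrow>
  (\<forall>p. length (f[p,False]) = length (f[p,True])) \<and> (f[False,False] = f[False,True] \<longrightarrow> f[True,False] = f[True,True])"
proof (induction rule: Mset.induct)
  case (gen i a b)
  hence "i = 0 \<or> i = 1" by auto
  thus ?case
  proof
    assume "i = 1"
    hence "(a,b) \<in> KM S" using gen by simp
    hence "length a = length b" by (auto simp: KM_def dest: mset_eq_length)
    thus ?case using \<open>i = 1\<close> by simp
  qed simp
next
  case (prod g h)
  show ?case
  proof (intro conjI allI impI)
    fix p show "length (g [p, False] @ h [p, False]) = length (g [p, True] @ h [p, True])"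
      using prod.IH by simp
  next
    assume "g [False, False] @ h [False, False] = g [False, True] @ h [False, True]"
    moreover have "length (g [False, False]) = length (g [False, True])" using prod.IH by simp
    ultimately have "g [False, False] = g [False, True]" "h [False, False] = h [False, True]"
      by (simp_all add: append_eq_append_conv)
    thus "g [True, False] @ h [True, False] = g [True, True] @ h [True, True]" using prod.IH by simp
  qed
qed

lemma is_cong_Id: "is_cong (lists S) (@) (Id_on (lists S))"
  by (auto simp: is_cong_def equiv_def refl_on_def sym_def trans_def)

lemma KM_sub: "KM S \<subseteq> lists S \<times> lists S" by (auto simp: KM_def)

lemma part2: "commutator (lists S) (@) [total_cong (lists S), KM S] = Id_on (lists S)"
proof
  have tc: "term_cond (@) [total_cong (lists S), KM S] (Id_on (lists S))"
    unfolding term_cond2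
  proof (intro ballI impI)
    fix g assume g: "g \<in> Mset (@) [total_cong (lists S), KM S]"
      and h: "(g [False, False], g [False, True]) \<in> Id_on (lists S)"
    have v: "g x \<in> lists S" for x
      by (rule Mset_vals[OF g]) (auto simp: less_Suc_eq total_cong_def KM_def)
    have e: "g [True,False] = g [True,True]" using inv_len[OF g] h by auto
    show "(g [True, False], g [True, True]) \<in> Id_on (lists S)"
      unfolding e by (rule Id_onI[OF v])
  qed
  show "commutator (lists S) (@) [total_cong (lists S), KM S] \<subseteq> Id_on (lists S)"
    by (rule comm_least[OF is_cong_Id tc])
  show "Id_on (lists S) \<subseteq> commutator (lists S) (@) [total_cong (lists S), KM S]"
    by (auto intro!: comm_memI intro: is_cong_refl)
qed

lemma rpow_nontriv:
  assumes ab: "a \<in> S" "b \<in> S" "a \<noteq> b"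
  shows "\<exists>u v. (u,v) \<in> rpow (lists S) (@) d \<and> u \<noteq> v \<and> length u = length v \<and> u \<in> lists S \<and> v \<in> lists S"
proof (induction d)
  case 0
  show ?case by (rule exI[of _ "[a]"], rule exI[of _ "[b]"]) (use ab in \<open>auto simp: total_cong_def\<close>)
next
  case (Suc d)
  then obtain u v where uv: "(u,v) \<in> rpow (lists S) (@) d" "u \<noteq> v" "length u = length v"
    "u \<in> lists S" "v \<in> lists S" by blast
  let ?f = "\<lambda>w. (if w!1 then [] else u) @ ((if w!0 then v else u) @ (if w!1 then u else []))"
  have mem: "(u @ v, v @ u) \<in> commutator (lists S) (@) [rpow (lists S) (@) d, total_cong (lists S)]"
  proof (rule comm_memI)
    fix r assume r: "is_cong (lists S) (@) r" and tc: "term_cond (@) [rpow (lists S) (@) d, total_cong (lists S)] r"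
    have "?f \<in> Mset (@) [rpow (lists S) (@) d, total_cong (lists S)]"
      by (intro Mset_app Mset.gen) (use uv in \<open>auto simp: total_cong_def\<close>)
    moreover have "(?f [False,False], ?f [False,True]) \<in> r"
    proof -
      have "(u@u,u@u) \<in> r" using is_cong_refl[OF r] uv by simp
      thus ?thesis by simp
    qed
    ultimately have "(?f [True,False], ?f [True,True]) \<in> r" by (rule tc2D[OF tc])
    thus "(u @ v, v @ u) \<in> r" by simp
  qed
  have "u @ v \<noteq> v @ u" using uv by (simp add: append_eq_append_conv)
  moreover have "(u @ v, v @ u) \<in> rpow (lists S) (@) (Suc d)" using mem by (simp only: rpow.simps)
  moreover have "length (u @ v) = length (v @ u)" by simp
  moreover have "u @ v \<in> lists S" "v @ u \<in> lists S" using uv by simp_all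
  ultimately show ?case by (intro exI[of _ "u@v"] exI[of _ "v@u"]) (intro conjI; assumption)
qed

lemma part4: "right_nilpotent (lists S) (@) \<longleftrightarrow> finite S \<and> card S \<le> 1"
proof
  assume rn: "right_nilpotent (lists S) (@)"
  have "\<exists>d. rpow (lists S) (@) d = trivial_cong (lists S)"
    using rn unfolding right_nilpotent_def by (elim exE conjE) (rule exI)
  then obtain d where d: "rpow (lists S) (@) d = trivial_cong (lists S)" by (rule exE)
  have sub: "\<forall>a\<in>S. \<forall>b\<in>S. a = b"
  proof (intro ballI, rule ccontr)
    fix a b assume "a \<in> S" "b \<in> S" "a \<noteq> b"
    then obtain u v where "(u,v) \<in> rpow (lists S) (@) d" "u \<noteq> v" using rpow_nontriv[of a S b d] by fast
    hence "(u,v) \<in> Id_on (lists S)" using d by (simp only: trivial_cong_def)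
    thus False using \<open>u \<noteq> v\<close> by (auto simp: Id_on_def)
  qed
  have fin: "finite S"
  proof (cases "S = {}")
    case False then obtain a where "a \<in> S" by blast
    hence "S \<subseteq> {a}" using sub by blast
    thus ?thesis by (rule finite_subset) simp
  qed simp
  thus "finite S \<and> card S \<le> 1" using sub card_le_Suc0_iff_eq by auto
next
  assume h: "finite S \<and> card S \<le> 1"
  hence sub: "\<forall>a\<in>S. \<forall>b\<in>S. a = b" using card_le_Suc0_iff_eq by auto
  have "rpow (lists S) (@) 1 = commutator (lists S) (@) [total_cong (lists S), total_cong (lists S)]"
    by (simp only: One_nat_def rpow.simps)
  also have "\<dots> = rho (lists S) (@) 1" by (rule part1)
  also have "\<dots> = KM S" by (rule rho1_eq_KM)
  also have "KM S = Id_on (lists S)"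
  proof
    show "KM S \<subseteq> Id_on (lists S)"
    proof
      fix p assume "p \<in> KM S"
      then obtain u v where p: "p = (u,v)" "mset u = mset v" "u \<in> lists S" "v \<in> lists S"
        unfolding KM_def by blast
      show "p \<in> Id_on (lists S)"
      proof (cases "u = []")
        case True
        hence "v = []" using p by simp
        thus ?thesis unfolding p(1) using True by (simp add: Id_on_def)
      next
        case False
        then obtain a where a: "a \<in> set u" by (cases u) auto
        hence aS: "a \<in> S" using p by auto
        have "replicate (length u) a = u" by (rule replicate_length_same) (use p sub aS in auto)
        moreover have "replicate (length v) a = v" by (rule replicate_length_same) (use p sub aS in auto)
        moreover have "length u = length v" using p mset_eq_length by blast
        ultimately have uv: "u = v" by metis
        show ?thesis unfolding p(1) uv by (rule Id_onI) (use p uv in blast)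
      qed
    qed
    show "Id_on (lists S) \<subseteq> KM S" by (auto simp: KM_def)
  qed
  finally have e: "rpow (lists S) (@) 1 = Id_on (lists S)" .
  show "right_nilpotent (lists S) (@)"
    unfolding right_nilpotent_def trivial_cong_def by (intro exI[of _ 1] conjI order.refl e)
qed



definition ca :: "'a \<Rightarrow> 'a list \<Rightarrow> nat" where "ca a w = length (filter (\<lambda>c. c = a) w)"
definition cb :: "'a \<Rightarrow> 'a list \<Rightarrow> nat" where "cb a w = length (filter (\<lambda>c. c \<noteq> a) w)"
fun gm :: "'a \<Rightarrow> 'a list \<Rightarrow> nat" where
  "gm a [] = 0"
| "gm a (c # w) = (if c = a then cb a w else 0) + gm a w"

lemma ca_simps[simp]: "ca a [] = 0" "ca a (c#w) = (if c = a then Suc (ca a w) else ca a w)"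
  "ca a (u @ v) = ca a u + ca a v"
  by (auto simp: ca_def)
lemma cb_simps[simp]: "cb a [] = 0" "cb a (c#w) = (if c = a then cb a w else Suc (cb a w))"
  "cb a (u @ v) = cb a u + cb a v"
  by (auto simp: cb_def)
lemma gm_append[simp]: "gm a (u @ v) = gm a u + gm a v + ca a u * cb a v"
  by (induction u) (auto simp: algebra_simps)
lemma rep_simps[simp]: "ca a (replicate k a) = k" "cb a (replicate k a) = 0" "gm a (replicate k a) = 0"
  by (induction k) auto
lemma len_cacb: "ca a w + cb a w = length w"
  unfolding ca_def cb_def by (rule sum_length_filter_compl)
lemma gm_le: "gm a w \<le> ca a w * cb a w"
  by (induction w) auto

definition KK :: "'a set \<Rightarrow> 'a \<Rightarrow> 'a list rel" where
  "KK S a = {(u,v). u \<in> lists S \<and> v \<in> lists S \<and> ca a u = ca a v \<and> cb a u = cb a v \<and> gm a u = gm a v}"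

lemma is_cong_KK: "is_cong (lists S) (@) (KK S a)"
  by (auto simp: is_cong_def equiv_def refl_on_def sym_def trans_def KK_def)

lemma KM_ca: "(u,v) \<in> KM S \<Longrightarrow> ca a u = ca a v \<and> cb a u = cb a v"
  unfolding KM_def ca_def cb_def by (metis (mono_tags) case_prodD mem_Collect_eq mset_filter size_mset)

lemma qq1: "qq (@) (2 - 1) x y z = x @ y @ z 1 @ y @ x"
  by (simp add: numeral_2_eq_2)

lemma rho2_sub_KK: "rho (lists S) (@) 2 \<subseteq> KK S a"
  unfolding rho_def qq1
  by (rule cong_gen_least[OF is_cong_KK]) (auto simp: KK_def algebra_simps in_lists_conv_set)

lemma rho2_gen: "x \<in> lists S \<Longrightarrow> y \<in> lists S \<Longrightarrow> z \<in> lists S \<Longrightarrow>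
   (x @ y @ z @ y @ x, y @ x @ z @ x @ y) \<in> rho (lists S) (@) 2"
  unfolding rho_def qq1
  by (rule subsetD[OF cong_gen_sup]) (auto intro!: exI[of _ "\<lambda>_. z"])

lemma rho2_ctx: "x \<in> lists S \<Longrightarrow> y \<in> lists S \<Longrightarrow> z \<in> lists S \<Longrightarrow> p \<in> lists S \<Longrightarrow> s \<in> lists S \<Longrightarrow>
   (p @ (x @ y @ z @ y @ x) @ s, p @ (y @ x @ z @ x @ y) @ s) \<in> rho (lists S) (@) 2"
  by (rule cong_ctx[OF is_cong_rho rho2_gen])

lemma no_ba_tail: "y \<in> lists {a,b} \<Longrightarrow> \<not>(\<exists>y1 y2. b # y = y1 @ b # a # y2) \<Longrightarrow> a \<notin> set y"
proof (induction y)
  case Nil thus ?case by simp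
next
  case (Cons c y)
  show ?case
  proof (cases "c = a")
    case True
    hence "b # c # y = [] @ b # a # y" by simp
    thus ?thesis using Cons.prems by blast
  next
    case False
    hence cb: "c = b" using Cons.prems by auto
    have "\<not>(\<exists>y1 y2. b # y = y1 @ b # a # y2)"
    proof
      assume "\<exists>y1 y2. b # y = y1 @ b # a # y2"
      then obtain y1 y2 where "b # y = y1 @ b # a # y2" by blast
      hence "b # c # y = (b # y1) @ b # a # y2" using cb by simp
      thus False using Cons.prems by blast
    qed
    thus ?thesis using Cons False by auto
  qed
qed

lemma no_ba_gm: "y \<in> lists {a,b} \<Longrightarrow> a \<noteq> b \<Longrightarrow> \<not>(\<exists>y1 y2. y = y1 @ b # a # y2) \<Longrightarrow> gm a y = ca a y * cb a y"
proof (induction y)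
  case Nil thus ?case by simp
next
  case (Cons c y)
  have ny: "\<not>(\<exists>y1 y2. y = y1 @ b # a # y2)"
  proof
    assume "\<exists>y1 y2. y = y1 @ b # a # y2"
    then obtain y1 y2 where "y = y1 @ b # a # y2" by blast
    hence "c # y = (c # y1) @ b # a # y2" by simp
    thus False using Cons.prems by blast
  qed
  have IH: "gm a y = ca a y * cb a y" using Cons.IH Cons.prems ny by simp
  show ?case
  proof (cases "c = a")
    case True thus ?thesis using IH by simp
  next
    case False
    hence c: "c = b" using Cons.prems by auto
    have "a \<notin> set y" by (rule no_ba_tail) (use Cons.prems c in auto)
    hence "ca a y = 0" by (auto simp: ca_def filter_empty_conv)
    thus ?thesis using IH False by simp
  qed
qed

lemma decomp: "u \<in> lists {a,b} \<Longrightarrow> b \<in> set u \<Longrightarrow> \<exists>k y. u = replicate k a @ b # y"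
proof (induction u)
  case Nil thus ?case by simp
next
  case (Cons c u)
  show ?case
  proof (cases "c = b")
    case True thus ?thesis by (intro exI[of _ 0]) auto
  next
    case False
    hence "c = a" "b \<in> set u" using Cons.prems by auto
    then obtain k y where "u = replicate k a @ b # y" using Cons by auto
    thus ?thesis using \<open>c = a\<close> by (intro exI[of _ "Suc k"]) auto
  qed
qed

lemma moveB:
  assumes ab: "a \<noteq> b" and S: "S \<subseteq> {a,b}" "a \<in> S" "b \<in> S"
  shows "replicate k a @ b # y \<in> lists S \<Longrightarrow>
    gm a (replicate k a @ b # y) \<le> (cb a (replicate k a @ b # y) - 1) * ca a (replicate k a @ b # y) \<Longrightarrow>
    \<exists>w \<in> lists S. (replicate k a @ b # y, b # w) \<in> rho (lists S) (@) 2"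
proof (induction k arbitrary: y)
  case 0
  hence "y \<in> lists S" by simp
  moreover have "(b # y, b # y) \<in> rho (lists S) (@) 2"
    by (rule is_cong_refl[OF is_cong_rho]) (use 0 in simp)
  ultimately show ?case by auto
next
  case (Suc k)
  have yS: "y \<in> lists S" using Suc.prems(1) by simp
  hence yab: "y \<in> lists {a,b}" using S(1) lists_mono by blast
  have "\<exists>y1 y2. y = y1 @ b # a # y2"
  proof (rule ccontr)
    assume "\<not> ?thesis"
    hence g: "gm a y = ca a y * cb a y" by (rule no_ba_gm[OF yab ab])
    have "gm a (replicate (Suc k) a @ b # y) = ca a y * cb a y + Suc k * Suc (cb a y)"
      using g ab by (simp del: replicate_Suc)
    moreover have "(cb a (replicate (Suc k) a @ b # y) - 1) * ca a (replicate (Suc k) a @ b # y)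
        = cb a y * (Suc k + ca a y)" using ab by (simp del: replicate_Suc)
    ultimately show False using Suc.prems(2) by (simp add: algebra_simps)
  qed
  then obtain y1 y2 where y: "y = y1 @ b # a # y2" by blast
  have y12: "y1 \<in> lists S" "y2 \<in> lists S" using yS y by auto
  have rk: "replicate k a \<in> lists S" using S by auto
  let ?u = "replicate (Suc k) a @ b # y"
  let ?y' = "a # y1 @ a # b # y2"
  have st: "(?u, replicate k a @ b # ?y') \<in> rho (lists S) (@) 2"
  proof -
    have "(replicate k a @ ([a] @ [b] @ y1 @ [b] @ [a]) @ y2, replicate k a @ ([b] @ [a] @ y1 @ [a] @ [b]) @ y2)
       \<in> rho (lists S) (@) 2"
      by (rule rho2_ctx) (use S y12 rk in auto)
    thus ?thesis using y by (simp add: replicate_app_Cons_same)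
  qed
  have K: "(?u, replicate k a @ b # ?y') \<in> KK S a" by (rule subsetD[OF rho2_sub_KK st])
  have "replicate k a @ b # ?y' \<in> lists S" using K by (simp add: KK_def)
  moreover have "gm a (replicate k a @ b # ?y') \<le> (cb a (replicate k a @ b # ?y') - 1) * ca a (replicate k a @ b # ?y')"
    using K Suc.prems(2) unfolding KK_def by (simp only: mem_Collect_eq case_prod_conv)
  ultimately obtain w where w: "w \<in> lists S" "(replicate k a @ b # ?y', b # w) \<in> rho (lists S) (@) 2"
    using Suc.IH by blast
  show ?case using is_cong_trans[OF is_cong_rho st w(2)] w(1) by blast
qed

lemma KK_len: "(u,v) \<in> KK S a \<Longrightarrow> length u = length v"
  unfolding KK_def using len_cacb by (metis (mono_tags, lifting) case_prodD mem_Collect_eq)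

lemma KK_Cons: "(c # u, c # v) \<in> KK S a \<Longrightarrow> (u, v) \<in> KK S a"
  unfolding KK_def by (auto split: if_splits)

lemma KK_sub_rho2:
  assumes S: "S \<subseteq> {a,b}"
  shows "(u,v) \<in> KK S a \<Longrightarrow> (u,v) \<in> rho (lists S) (@) 2"
proof -
  let ?R = "rho (lists S) (@) 2"
  have "\<forall>u v. length u = n \<longrightarrow> (u,v) \<in> KK S a \<longrightarrow> (u,v) \<in> ?R" for n
  proof (induction n rule: less_induct)
    case (less n)
    have H: "(a # u', b # v') \<in> ?R" if uv: "(a # u', b # v') \<in> KK S a" and ln: "length (a # u') = n"
      and ab: "a \<noteq> b" for u' v'
    proof -
      let ?u = "a # u'"
      have uS: "?u \<in> lists S" and vS: "b # v' \<in> lists S" using uv by (auto simp: KK_def)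
      hence abS: "a \<in> S" "b \<in> S" by auto
      have uab: "?u \<in> lists {a,b}" using uS S lists_mono by blast
      have eqs: "ca a ?u = ca a (b # v')" "cb a ?u = cb a (b # v')" "gm a ?u = gm a (b # v')"
        using uv by (auto simp: KK_def)
      have "cb a ?u \<noteq> 0" using eqs(2) ab by simp
      hence "filter (\<lambda>c. c \<noteq> a) ?u \<noteq> []" unfolding cb_def by (metis list.size(3))
      then obtain c where c: "c \<in> set ?u" "c \<noteq> a" unfolding filter_empty_conv by blast
      hence "c = b" using uab by auto
      then obtain k y where ky: "?u = replicate k a @ b # y" using decomp[OF uab] c by blast
      have bound: "gm a ?u \<le> (cb a ?u - 1) * ca a ?u"
        using eqs ab gm_le[of a v'] by (simp add: mult.commute)
      have bnd: "gm a (replicate k a @ b # y) \<le> (cb a (replicate k a @ b # y) - 1) * ca a (replicate k a @ b # y)"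
        using bound unfolding ky .
      have "replicate k a @ b # y \<in> lists S" using uS unfolding ky .
      then obtain w where w0: "w \<in> lists S" "(replicate k a @ b # y, b # w) \<in> ?R"
        using moveB[OF ab S abS, of k y] bnd by blast
      have w: "w \<in> lists S" "(?u, b # w) \<in> ?R" using w0 unfolding ky by simp_all
      have K1: "(?u, b # w) \<in> KK S a" by (rule subsetD[OF rho2_sub_KK w(2)])
      have "(b # w, b # v') \<in> KK S a"
        by (rule is_cong_trans[OF is_cong_KK is_cong_sym[OF is_cong_KK K1] uv])
      hence K2: "(w, v') \<in> KK S a" by (rule KK_Cons)
      have "length (b # w) = n" using KK_len[OF K1] ln by simp
      hence "(w, v') \<in> ?R" using less.IH K2 by auto
      hence "([b] @ w @ [], [b] @ v' @ []) \<in> ?R"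
        by (rule cong_ctx[OF is_cong_rho]) (use abS in auto)
      thus ?thesis using is_cong_trans[OF is_cong_rho w(2)] by simp
    qed
    show ?case
    proof (intro allI impI)
      fix u v assume ln: "length u = n" and uv: "(u,v) \<in> KK S a"
      have lv: "length v = n" using KK_len[OF uv] ln by simp
      show "(u,v) \<in> ?R"
      proof (cases u)
        case Nil
        hence "v = []" using lv ln by simp
        thus ?thesis using Nil by (auto intro: is_cong_refl[OF is_cong_rho])
      next
        case (Cons c u')
        then obtain d v' where v: "v = d # v'" using lv ln by (cases v) auto
        have cd: "c \<in> S" "d \<in> S" "u' \<in> lists S" "v' \<in> lists S"
          using uv Cons v by (auto simp: KK_def)
        show ?thesis
        proof (cases "c = d")
          case True
          hence "(u', v') \<in> KK S a" using KK_Cons[of c u' v' S a] uv Cons v by simp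
          hence "(u', v') \<in> ?R" using less.IH Cons ln by auto
          hence "([c] @ u' @ [], [c] @ v' @ []) \<in> ?R"
            by (rule cong_ctx[OF is_cong_rho]) (use cd in auto)
          thus ?thesis using Cons v True by simp
        next
          case False
          have ab: "a \<noteq> b" using False cd S by auto
          show ?thesis
          proof (cases "c = a")
            case True
            hence "d = b" using False cd S by auto
            thus ?thesis using H[of u' v'] uv Cons v True ln ab by simp
          next
            case False
            hence ca: "c = b" "d = a" using \<open>c \<noteq> d\<close> cd S by auto
            have "(v, u) \<in> KK S a" by (rule is_cong_sym[OF is_cong_KK uv])
            hence "(v, u) \<in> ?R" using H[of v' u'] Cons v ca lv ab by simp
            thus ?thesis by (rule is_cong_sym[OF is_cong_rho])
          qed
        qed
      qed
    qed
  qed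
  thus "(u,v) \<in> KK S a \<Longrightarrow> (u,v) \<in> ?R" by blast
qed

lemma rho2_eq_KK: "S \<subseteq> {a,b} \<Longrightarrow> rho (lists S) (@) 2 = KK S a"
proof (rule equalityI)
  show "rho (lists S) (@) 2 \<subseteq> KK S a" by (rule rho2_sub_KK)
  assume S: "S \<subseteq> {a,b}"
  show "KK S a \<subseteq> rho (lists S) (@) 2"
  proof (rule subrelI)
    fix u v assume "(u,v) \<in> KK S a" thus "(u,v) \<in> rho (lists S) (@) 2" by (rule KK_sub_rho2[OF S])
  qed
qed

lemma inv2: "f \<in> Mset (@) [KM S, \<beta>] \<Longrightarrow>
  (\<forall>q. ca a (f[True,q]) = ca a (f[False,q]) \<and> cb a (f[True,q]) = cb a (f[False,q])) \<and>
  gm a (f[True,True]) + gm a (f[False,False]) = gm a (f[True,False]) + gm a (f[False,True])"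
proof (induction rule: Mset.induct)
  case (gen i x y)
  hence "i = 0 \<or> i = 1" by auto
  thus ?case
  proof
    assume "i = 0"
    hence "(x,y) \<in> KM S" using gen by simp
    hence "ca a x = ca a y \<and> cb a x = cb a y" by (rule KM_ca)
    thus ?case using \<open>i = 0\<close> by simp
  qed simp
next
  case (prod g h)
  have e1: "ca a (g[True,q]) = ca a (g[False,q])" "cb a (g[True,q]) = cb a (g[False,q])"
     "ca a (h[True,q]) = ca a (h[False,q])" "cb a (h[True,q]) = cb a (h[False,q])" for q
    using prod.IH by auto
  have g: "gm a (g[True,True]) + gm a (g[False,False]) = gm a (g[True,False]) + gm a (g[False,True])"
   and h: "gm a (h[True,True]) + gm a (h[False,False]) = gm a (h[True,False]) + gm a (h[False,True])"
    using prod.IH by auto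
  show ?case using g h by (simp add: e1)
qed

lemma tc_KK2: "term_cond (@) [KM S, total_cong (lists S)] (KK S a)"
  unfolding term_cond2
proof (intro ballI impI)
  fix g assume g: "g \<in> Mset (@) [KM S, total_cong (lists S)]"
    and h: "(g [False, False], g [False, True]) \<in> KK S a"
  have v: "g x \<in> lists S" for x
    by (rule Mset_vals[OF g]) (auto simp: less_Suc_eq total_cong_def KM_def)
  show "(g [True, False], g [True, True]) \<in> KK S a"
    using inv2[OF g, of a] h v unfolding KK_def by auto
qed

lemma rho2_sub_commKM: "rho (lists S) (@) 2 \<subseteq> commutator (lists S) (@) [KM S, total_cong (lists S)]"
proof
  fix p assume p: "p \<in> rho (lists S) (@) 2"
  show "p \<in> commutator (lists S) (@) [KM S, total_cong (lists S)]"
  proof (rule comm_memI)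
    fix d assume d: "is_cong (lists S) (@) d" and tc: "term_cond (@) [KM S, total_cong (lists S)] d"
    have key: "(x @ y @ z @ y @ x, y @ x @ z @ x @ y) \<in> d"
      if x: "x \<in> lists S" and y: "y \<in> lists S" and z: "z \<in> lists S" for x y z
    proof -
      let ?f = "\<lambda>w. (if w!1 then y @ x @ z else []) @ ((if w!0 then x @ y else y @ x) @ (if w!1 then [] else z @ y @ x))"
      have "?f \<in> Mset (@) [KM S, total_cong (lists S)]"
        by (intro Mset_app Mset.gen) (use x y z in \<open>auto simp: total_cong_def KM_def\<close>)
      moreover have "(?f [False,False], ?f [False,True]) \<in> d"
      proof -
        have "(y @ x @ z @ y @ x, y @ x @ z @ y @ x) \<in> d" by (rule is_cong_refl[OF d]) (use x y z in simp)
        thus ?thesis by simp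
      qed
      ultimately have "(?f [True,False], ?f [True,True]) \<in> d" by (rule tc2D[OF tc])
      thus ?thesis by simp
    qed
    have "rho (lists S) (@) 2 \<subseteq> d" unfolding rho_def qq1
      by (rule cong_gen_least[OF d]) (auto intro!: key simp: in_lists_conv_set)
    thus "p \<in> d" using p by blast
  qed
qed

definition D1 :: "(bool list \<Rightarrow> nat) \<Rightarrow> bool" where
  "D1 F \<longleftrightarrow> (\<exists>c h1 h2 h3. \<forall>p q r. F [p,q,r] = c + h1 p + h2 q + h3 r)"
definition TD :: "(bool list \<Rightarrow> nat) \<Rightarrow> bool" where
  "TD F \<longleftrightarrow> F[True,True,True] + F[True,False,False] + F[False,True,False] + F[False,False,True]
     = F[True,True,False] + F[True,False,True] + F[False,True,True] + F[False,False,False]"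

lemma D1_single: "i < 3 \<Longrightarrow> D1 (\<lambda>x. G (x ! i))"
proof -
  assume "i < 3"
  hence "i = 0 \<or> i = 1 \<or> i = 2" by auto
  thus ?thesis unfolding D1_def
  proof (elim disjE)
    assume "i = 0" thus "\<exists>c h1 h2 h3. \<forall>p q r. G ([p,q,r] ! i) = c + h1 p + h2 q + h3 r"
      by (intro exI[of _ 0] exI[of _ G] exI[of _ "\<lambda>_. 0"]) simp
  next
    assume "i = 1" thus "\<exists>c h1 h2 h3. \<forall>p q r. G ([p,q,r] ! i) = c + h1 p + h2 q + h3 r"
      by (intro exI[of _ 0] exI[of _ "\<lambda>_. 0"] exI[of _ G] exI[of _ "\<lambda>_. 0"]) simp
  next
    assume "i = 2" thus "\<exists>c h1 h2 h3. \<forall>p q r. G ([p,q,r] ! i) = c + h1 p + h2 q + h3 r"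
      by (intro exI[of _ 0] exI[of _ "\<lambda>_. 0"] exI[of _ "\<lambda>_. 0"] exI[of _ G]) simp
  qed
qed

lemma TD_single: "i < 3 \<Longrightarrow> TD (\<lambda>x. G (x ! i))"
proof -
  assume "i < 3"
  hence "i = 0 \<or> i = 1 \<or> i = 2" by auto
  thus ?thesis unfolding TD_def by auto
qed

lemma D1_add: "D1 F \<Longrightarrow> D1 G \<Longrightarrow> D1 (\<lambda>x. F x + G x)"
proof -
  assume "D1 F" "D1 G"
  then obtain c h1 h2 h3 d k1 k2 k3 where F: "\<forall>p q r. F [p,q,r] = c + h1 p + h2 q + h3 r"
    and G: "\<forall>p q r. G [p,q,r] = d + k1 p + k2 q + k3 r" unfolding D1_def by blast
  show ?thesis unfolding D1_def
    by (rule exI[of _ "c + d"], rule exI[of _ "\<lambda>p. h1 p + k1 p"], rule exI[of _ "\<lambda>p. h2 p + k2 p"],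
        rule exI[of _ "\<lambda>p. h3 p + k3 p"]) (simp add: F G)
qed

lemma TD_add: "TD F \<Longrightarrow> TD G \<Longrightarrow> TD (\<lambda>x. F x + G x)"
  unfolding TD_def by simp

lemma TD_mult: "D1 F \<Longrightarrow> D1 G \<Longrightarrow> TD (\<lambda>x. F x * G x)"
proof -
  assume "D1 F" "D1 G"
  then obtain c h1 h2 h3 d k1 k2 k3 where F: "\<forall>p q r. F [p,q,r] = c + h1 p + h2 q + h3 r"
    and G: "\<forall>p q r. G [p,q,r] = d + k1 p + k2 q + k3 r" unfolding D1_def by blast
  show ?thesis unfolding TD_def by (simp add: F G algebra_simps)
qed

lemma inv3: "f \<in> Mset (@) [\<alpha>,\<beta>,\<gamma>] \<Longrightarrow>
  D1 (\<lambda>x. ca a (f x)) \<and> D1 (\<lambda>x. cb a (f x)) \<and> TD (\<lambda>x. gm a (f x))"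
proof (induction rule: Mset.induct)
  case (gen i x y)
  hence i: "i < 3" by simp
  show ?case
    using D1_single[OF i, of "\<lambda>t. ca a (if t then y else x)"]
      D1_single[OF i, of "\<lambda>t. cb a (if t then y else x)"]
      TD_single[OF i, of "\<lambda>t. gm a (if t then y else x)"] by simp
next
  case (prod g h)
  have e: "(\<lambda>x. ca a (g x @ h x)) = (\<lambda>x. ca a (g x) + ca a (h x))"
    "(\<lambda>x. cb a (g x @ h x)) = (\<lambda>x. cb a (g x) + cb a (h x))"
    "(\<lambda>x. gm a (g x @ h x)) = (\<lambda>x. (gm a (g x) + gm a (h x)) + ca a (g x) * cb a (h x))"
    by auto
  show ?case unfolding e using prod.IH
    by (intro conjI D1_add TD_add TD_mult) auto
qed

lemma total3_sub: "\<forall>i<length [total_cong (lists S), total_cong (lists S), total_cong (lists S)].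
   [total_cong (lists S), total_cong (lists S), total_cong (lists S)]!i \<subseteq> lists S \<times> lists S"
  by (auto simp: less_Suc_eq total_cong_def)

lemma tc_KK3: "term_cond (@) [total_cong (lists S), total_cong (lists S), total_cong (lists S)] (KK S a)"
  unfolding term_cond3
proof (intro ballI impI)
  fix g assume g: "g \<in> Mset (@) [total_cong (lists S), total_cong (lists S), total_cong (lists S)]"
    and h: "(g [False, False, False], g [False, False, True]) \<in> KK S a \<and>
         (g [False, True, False], g [False, True, True]) \<in> KK S a \<and>
         (g [True, False, False], g [True, False, True]) \<in> KK S a"
  have v: "g x \<in> lists S" for x by (rule Mset_vals[OF g total3_sub])
  have I: "D1 (\<lambda>x. ca a (g x))" "D1 (\<lambda>x. cb a (g x))" "TD (\<lambda>x. gm a (g x))" using inv3[OF g] by auto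
  obtain c h1 h2 h3 where F: "\<forall>p q r. ca a (g [p,q,r]) = c + h1 p + h2 q + h3 r"
    using I(1) unfolding D1_def by blast
  obtain d k1 k2 k3 where G: "\<forall>p q r. cb a (g [p,q,r]) = d + k1 p + k2 q + k3 r"
    using I(2) unfolding D1_def by blast
  have h3: "h3 True = h3 False" "k3 True = k3 False" using h F G unfolding KK_def by auto
  have "ca a (g [True,True,False]) = ca a (g [True,True,True])" using F h3 by simp
  moreover have "cb a (g [True,True,False]) = cb a (g [True,True,True])" using G h3 by simp
  moreover have "gm a (g [True,True,False]) = gm a (g [True,True,True])"
    using I(3) h unfolding TD_def KK_def by auto
  ultimately show "(g [True, True, False], g [True, True, True]) \<in> KK S a"
    using v unfolding KK_def by auto
qed

lemma rho2_sub_comm3: "rho (lists S) (@) 2 \<subseteq>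
   commutator (lists S) (@) [total_cong (lists S), total_cong (lists S), total_cong (lists S)]"
proof
  fix p assume p: "p \<in> rho (lists S) (@) 2"
  show "p \<in> commutator (lists S) (@) [total_cong (lists S), total_cong (lists S), total_cong (lists S)]"
  proof (rule comm_memI)
    fix d assume d: "is_cong (lists S) (@) d"
      and tc: "term_cond (@) [total_cong (lists S), total_cong (lists S), total_cong (lists S)] d"
    have key: "(x @ y @ z @ y @ x, y @ x @ z @ x @ y) \<in> d"
      if x: "x \<in> lists S" and y: "y \<in> lists S" and z: "z \<in> lists S" for x y z
    proof -
      let ?f = "\<lambda>w. (if w!2 then y @ x @ z else []) @ (((if w!0 then [] else y) @ ((if w!1 then x else []) @
          ((if w!0 then y else []) @ (if w!1 then [] else x)))) @ (if w!2 then [] else z @ y @ x))"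
      have "?f \<in> Mset (@) [total_cong (lists S), total_cong (lists S), total_cong (lists S)]"
        by (intro Mset_app Mset.gen) (use x y z in \<open>auto simp: total_cong_def\<close>)
      moreover have r: "(y @ x @ z @ y @ x, y @ x @ z @ y @ x) \<in> d" by (rule is_cong_refl[OF d]) (use x y z in simp)
      ultimately have "(?f [True,True,False], ?f [True,True,True]) \<in> d"
        by (intro tc3D[OF tc]) simp_all
      thus ?thesis by simp
    qed
    have "rho (lists S) (@) 2 \<subseteq> d" unfolding rho_def qq1
      by (rule cong_gen_least[OF d]) (auto intro!: key simp: in_lists_conv_set)
    thus "p \<in> d" using p by blast
  qed
qed

lemma canc_KK: "cancellative_cong (lists S) (@) (KK S a)"
  unfolding cancellative_cong_def KK_def by auto

lemma fac: assumes "a \<noteq> b" "a \<noteq> c" "b \<noteq> c" "p @ x @ y @ z @ y @ x @ s = [a,b,b,c,c,a,b]"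
  shows "x = [] \<or> y = []"
  using assms
  apply (cases x; cases y)
  apply simp_all
  apply (auto simp: append_eq_Cons_conv Cons_eq_append_conv append_eq_append_conv2)
  done

definition II :: "'a list \<Rightarrow> 'a list set" where "II u = {w. \<not>(\<exists>p s. p @ w @ s = u)}"

lemma II_left: assumes "w \<in> II u" shows "p @ w \<in> II u"
proof -
  { fix p' s' assume "p' @ (p @ w) @ s' = u" hence "(p' @ p) @ w @ s' = u" by simp }
  thus ?thesis using assms unfolding II_def by blast
qed
lemma II_right: assumes "w \<in> II u" shows "w @ s \<in> II u"
proof -
  { fix p' s' assume "p' @ (w @ s) @ s' = u" hence "p' @ w @ (s @ s') = u" by simp }
  thus ?thesis using assms unfolding II_def by blast
qed

definition RR :: "'a set \<Rightarrow> 'a list \<Rightarrow> 'a list rel" where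
  "RR S u = Id_on (lists S) \<union> ((lists S \<inter> II u) \<times> (lists S \<inter> II u))"

lemma is_cong_RR: "is_cong (lists S) (@) (RR S u)"
  unfolding is_cong_def
proof (intro conjI allI impI)
  show "equiv (lists S) (RR S u)"
    by (auto simp: RR_def equiv_def refl_on_def sym_def trans_def)
  fix w1 w2 w3 w4 assume 1: "(w1, w2) \<in> RR S u" and 2: "(w3, w4) \<in> RR S u"
  show "(w1 @ w3, w2 @ w4) \<in> RR S u"
  proof (cases "w1 = w2 \<and> w1 \<in> lists S")
    case True
    show ?thesis
    proof (cases "w3 = w4 \<and> w3 \<in> lists S")
      case True2: True
      thus ?thesis using True by (auto simp: RR_def)
    next
      case False
      hence "w3 \<in> lists S \<inter> II u" "w4 \<in> lists S \<inter> II u" using 2 by (auto simp: RR_def)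
      thus ?thesis using True II_left by (auto simp: RR_def)
    qed
  next
    case False
    hence a: "w1 \<in> lists S \<inter> II u" "w2 \<in> lists S \<inter> II u" using 1 by (auto simp: RR_def)
    have "w3 \<in> lists S" "w4 \<in> lists S" using 2 by (auto simp: RR_def)
    thus ?thesis using a II_right by (auto simp: RR_def)
  qed
qed

lemma noncanc:
  assumes abc: "a \<in> S" "b \<in> S" "c \<in> S" "a \<noteq> b" "a \<noteq> c" "b \<noteq> c"
  shows "\<not> cancellative_cong (lists S) (@) (rho (lists S) (@) 2)"
proof
  let ?R = "rho (lists S) (@) 2"
  let ?u = "[a,b,b,c,c,a,b]" and ?v = "[b,c,a,a,b,b,c]"
  assume canc: "cancellative_cong (lists S) (@) ?R"
  have s1: "([] @ ([a,b,b] @ [c] @ [] @ [c] @ [a,b,b]) @ [], [] @ ([c] @ [a,b,b] @ [] @ [a,b,b] @ [c]) @ []) \<in> ?R"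
    by (rule rho2_ctx) (use abc in auto)
  have s2: "([c] @ ([a] @ [b] @ [] @ [b] @ [a]) @ [b,b,c], [c] @ ([b] @ [a] @ [] @ [a] @ [b]) @ [b,b,c]) \<in> ?R"
    by (rule rho2_ctx) (use abc in auto)
  have s3: "([] @ ([c] @ [b] @ [a,a,b,b] @ [b] @ [c]) @ [], [] @ ([b] @ [c] @ [a,a,b,b] @ [c] @ [b]) @ []) \<in> ?R"
    by (rule rho2_ctx) (use abc in auto)
  have t1: "(?u @ [b], [c,a,b,b,a,b,b,c]) \<in> ?R" using s1 by simp
  have t2: "([c,a,b,b,a,b,b,c], [c,b,a,a,b,b,b,c]) \<in> ?R" using s2 by simp
  have t3: "([c,b,a,a,b,b,b,c], ?v @ [b]) \<in> ?R" using s3 by simp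
  have "(?u @ [b], ?v @ [b]) \<in> ?R"
    by (rule is_cong_trans[OF is_cong_rho is_cong_trans[OF is_cong_rho t1 t2] t3])
  moreover have l: "?u \<in> lists S" "?v \<in> lists S" "[b] \<in> lists S" using abc by auto
  have "(?u @ [b], ?v @ [b]) \<in> ?R \<longrightarrow> (?u, ?v) \<in> ?R"
    using canc l unfolding cancellative_cong_def by blast
  ultimately have uv: "(?u, ?v) \<in> ?R" by blast
  have key: "(x @ y @ zz @ y @ x, y @ x @ zz @ x @ y) \<in> RR S ?u"
    if x: "x \<in> lists S" and y: "y \<in> lists S" and zS: "zz \<in> lists S" for x y zz
  proof (cases "x @ y @ zz @ y @ x \<in> II ?u \<and> y @ x @ zz @ x @ y \<in> II ?u")
    case True thus ?thesis using x y zS by (auto simp: RR_def)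
  next
    case False
    have "x = [] \<or> y = []"
    proof (cases "x @ y @ zz @ y @ x \<in> II ?u")
      case True
      with False obtain p s where "p @ (y @ x @ zz @ x @ y) @ s = ?u" unfolding II_def by blast
      hence "y = [] \<or> x = []" using fac[OF abc(4-6), of p y x zz s] by simp
      thus ?thesis by blast
    next
      case False
      then obtain p s where "p @ (x @ y @ zz @ y @ x) @ s = ?u" unfolding II_def by blast
      thus ?thesis using fac[OF abc(4-6), of p x y zz s] by simp
    qed
    hence "x @ y @ zz @ y @ x = y @ x @ zz @ x @ y" by auto
    thus ?thesis using x y zS by (auto simp: RR_def)
  qed
  have "?R \<subseteq> RR S ?u" unfolding rho_def qq1
    by (rule cong_gen_least[OF is_cong_RR]) (auto intro!: key simp: in_lists_conv_set)
  hence "(?u, ?v) \<in> RR S ?u" using uv by blast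
  moreover have "?u \<notin> II ?u" unfolding II_def by (auto intro!: exI[of _ "[]"])
  ultimately show False using abc by (auto simp: RR_def)
qed

lemma two_elems: "finite A \<Longrightarrow> card A \<le> 2 \<Longrightarrow> \<exists>a b. A \<subseteq> {a,b}"
proof -
  assume f: "finite A" and c: "card A \<le> 2"
  hence "card A = 0 \<or> card A = 1 \<or> card A = 2" by linarith
  thus ?thesis
  proof (elim disjE)
    assume "card A = 0" hence "A = {}" using f by simp thus ?thesis by blast
  next
    assume "card A = 1" then obtain x where "A = {x}" by (auto simp: card_1_singleton_iff)
    thus ?thesis by blast
  next
    assume "card A = 2" then obtain x y where "A = {x,y}" by (auto simp: card_2_iff)
    thus ?thesis by blast
  qed
qed

lemma three_elems: "\<not> (finite A \<and> card A \<le> 2) \<Longrightarrow> \<exists>a b c. a \<in> A \<and> b \<in> A \<and> c \<in> A \<and> a \<noteq> b \<and> a \<noteq> c \<and> b \<noteq> c"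
proof -
  assume h: "\<not> (finite A \<and> card A \<le> 2)"
  have "\<exists>B. B \<subseteq> A \<and> card B = 3"
  proof (cases "finite A")
    case True hence "3 \<le> card A" using h by auto
    then obtain B where "B \<subseteq> A" "card B = 3" "finite B" by (rule obtain_subset_with_card_n)
    thus ?thesis by blast
  next
    case False thus ?thesis using infinite_arbitrarily_large by blast
  qed
  then obtain B where B: "B \<subseteq> A" "card B = 3" by blast
  then obtain x y z where "B = {x,y,z}" "x \<noteq> y" "y \<noteq> z" "x \<noteq> z" by (auto simp: card_3_iff)
  thus ?thesis using B(1) by blast
qed

theorem theorem4p8:
  fixes \<Sigma> :: "'a set"
  defines "S \<equiv> lists \<Sigma>"
  defines "one \<equiv> total_cong S"
  shows "commutator S (@) [one, one] = rho S (@) 1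
    \<and> commutator S (@) [one, commutator S (@) [one, one]] = trivial_cong S
    \<and> (finite \<Sigma> \<and> card \<Sigma> \<le> 2 \<longrightarrow>
           rho S (@) 2 = commutator S (@) [commutator S (@) [one, one], one]
         \<and> rho S (@) 2 = commutator S (@) [one, one, one]
         \<and> cancellative_cong S (@) (rho S (@) 2))
    \<and> (\<not> (finite \<Sigma> \<and> card \<Sigma> \<le> 2) \<longrightarrow> \<not> cancellative_cong S (@) (rho S (@) 2))
    \<and> (right_nilpotent S (@) \<longleftrightarrow> finite \<Sigma> \<and> card \<Sigma> \<le> 1)"
proof -
  have c1: "commutator S (@) [one, one] = rho S (@) 1" unfolding S_def one_def by (rule part1)
  have c1': "commutator S (@) [one, one] = KM \<Sigma>" using c1 rho1_eq_KM unfolding S_def by simp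
  have c2: "commutator S (@) [one, commutator S (@) [one, one]] = trivial_cong S"
    unfolding c1' unfolding S_def one_def trivial_cong_def by (rule part2)
  have c3: "finite \<Sigma> \<and> card \<Sigma> \<le> 2 \<longrightarrow>
           rho S (@) 2 = commutator S (@) [commutator S (@) [one, one], one]
         \<and> rho S (@) 2 = commutator S (@) [one, one, one]
         \<and> cancellative_cong S (@) (rho S (@) 2)"
  proof
    assume "finite \<Sigma> \<and> card \<Sigma> \<le> 2"
    then obtain a b where ab: "\<Sigma> \<subseteq> {a,b}" using two_elems by blast
    have r: "rho S (@) 2 = KK \<Sigma> a" unfolding S_def by (rule rho2_eq_KK[OF ab])
    have e1: "commutator S (@) [KM \<Sigma>, one] = KK \<Sigma> a"
    proof
      show "commutator S (@) [KM \<Sigma>, one] \<subseteq> KK \<Sigma> a"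
        unfolding S_def one_def by (rule comm_least[OF is_cong_KK tc_KK2])
      show "KK \<Sigma> a \<subseteq> commutator S (@) [KM \<Sigma>, one]"
        using rho2_sub_commKM[of \<Sigma>] r unfolding S_def one_def by simp
    qed
    have e2: "commutator S (@) [one, one, one] = KK \<Sigma> a"
    proof
      show "commutator S (@) [one, one, one] \<subseteq> KK \<Sigma> a"
        unfolding S_def one_def by (rule comm_least[OF is_cong_KK tc_KK3])
      show "KK \<Sigma> a \<subseteq> commutator S (@) [one, one, one]"
        using rho2_sub_comm3[of \<Sigma>] r unfolding S_def one_def by simp
    qed
    show "rho S (@) 2 = commutator S (@) [commutator S (@) [one, one], one]
         \<and> rho S (@) 2 = commutator S (@) [one, one, one]
         \<and> cancellative_cong S (@) (rho S (@) 2)"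
      unfolding c1' e1 e2 r unfolding S_def by (simp add: canc_KK)
  qed
  have c4: "\<not> (finite \<Sigma> \<and> card \<Sigma> \<le> 2) \<longrightarrow> \<not> cancellative_cong S (@) (rho S (@) 2)"
  proof
    assume "\<not> (finite \<Sigma> \<and> card \<Sigma> \<le> 2)"
    then obtain a b c where abc: "a \<in> \<Sigma>" "b \<in> \<Sigma>" "c \<in> \<Sigma>" "a \<noteq> b" "a \<noteq> c" "b \<noteq> c"
      using three_elems by blast
    show "\<not> cancellative_cong S (@) (rho S (@) 2)" unfolding S_def by (rule noncanc[OF abc])
  qed
  have c5: "right_nilpotent S (@) \<longleftrightarrow> finite \<Sigma> \<and> card \<Sigma> \<le> 1" unfolding S_def by (rule part4)
  show ?thesis by (intro conjI c1 c2 c3 c4 c5)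
qed

end
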